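(* Let $r:\mathbb{R}^\ell\to\mathbb{R}^m$ be differentiable with Jacobian $J_r$, let $\mu>0$ be differentiable near $x$ with $\eta=\log\mu$, and suppose $J_r(x)$ has full column rank. Let $p=-J_r^+r$ (all quantities at $x$), $\beta=1-\langle p,\nabla\eta\rangle$, $P=I-J_rJ_r^+$, $\omega=\|Pr\|_2^2\|(J_r^+)^T\nabla\eta\|_2^2+\beta^2$, and assume $\omega\ne0$. Then the Gauss--Newton step for the deflated residual $\mu r$, namely $\hat p=-J_{\mu r}(x)^+\mu(x)r(x)$ with $J_{\mu r}=\mu J_r+r\nabla\mu^T$, satisfies $$\hat p=\beta_1p+\beta_2(J_r^TJ_r)^{-1}\nabla\eta,\qquad \beta_1=\frac{\beta}{\omega},\quad \beta_2=-\frac{\|Pr\|_2^2}{\omega}.$$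
   Context: $A^+$ denotes the Moore--Penrose pseudoinverse; for full column rank $J_r$, $J_r^+=(J_r^TJ_r)^{-1}J_r^T$. $\nabla\eta=\mu^{-1}\nabla\mu$. *)

theory Defs
  imports "HOL-Analysis.Analysis"
begin

definition pinv :: "real^'n^'m \<Rightarrow> real^'m^'n" where
  "pinv A = (THE B. A ** B ** A = A \<and> B ** A ** B = B \<and>
                    transpose (A ** B) = A ** B \<and> transpose (B ** A) = B ** A)"

definition outer :: "real^'m \<Rightarrow> real^'n \<Rightarrow> real^'n^'m" where
  "outer u v = (\<chi> i j. u $ i * v $ j)"

end

theory Submission imports Defs begin

lemma inner_mv: "inner (A *v x) y = inner x (transpose A *v y)" for A :: "real^'n^'m"
  by (metis dot_lmul_matrix inner_commute transpose_matrix_vector)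

lemma outer_mv: "outer u w *v v = (w \<bullet> v) *\<^sub>R u"
  by (simp add: vec_eq_iff outer_def matrix_vector_mult_def inner_vec_def sum_distrib_left mult_ac)

lemma transpose_outer: "transpose (outer u w) = outer w u"
  by (simp add: transpose_def outer_def vec_eq_iff mult.commute)

lemma minv: "invertible (G::real^'n^'n) \<Longrightarrow> G ** matrix_inv G = mat 1 \<and> matrix_inv G ** G = mat 1"
  unfolding invertible_def matrix_inv_def by (rule someI_ex)

lemma minv_sym:
  assumes "invertible (G::real^'n^'n)" "transpose G = G"
  shows "transpose (matrix_inv G) = matrix_inv G"
proof -
  let ?M = "matrix_inv G"
  have "transpose ?M ** G = mat 1"
    by (metis assms matrix_transpose_mul minv transpose_mat)
  then show ?thesis
    by (metis assms(1) matrix_mul_assoc matrix_mul_lid matrix_mul_rid minv)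
qed

lemma gram_inv:
  fixes A :: "real^'n^'m"
  assumes "inj ((*v) A)"
  shows "invertible (transpose A ** A)"
proof -
  have "\<forall>z. (transpose A ** A) *v z = 0 \<longrightarrow> z = 0"
  proof (intro allI impI)
    fix z assume "(transpose A ** A) *v z = 0"
    then have "inner z ((transpose A ** A) *v z) = 0" by simp
    then have "inner (A *v z) (A *v z) = 0"
      by (metis inner_mv matrix_vector_mul_assoc inner_commute)
    then have "A *v z = 0" by simp
    then show "z = 0" using assms by (metis injD matrix_vector_mult_0_right)
  qed
  then show ?thesis
    using matrix_left_invertible_ker invertible_left_inverse by blast
qed

lemma pinv_inj:
  fixes A :: "real^'n^'m"
  assumes "inj ((*v) A)"
  shows "pinv A = matrix_inv (transpose A ** A) ** transpose A"
proof -
  let ?G = "transpose A ** A"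
  let ?M = "matrix_inv ?G"
  have iG: "invertible ?G" using gram_inv[OF assms] .
  have GM: "?G ** ?M = mat 1" and MG: "?M ** ?G = mat 1" using minv[OF iG] by auto
  have sG: "transpose ?G = ?G" by (simp add: matrix_transpose_mul)
  have sM: "transpose ?M = ?M" using minv_sym[OF iG sG] .
  let ?B = "?M ** transpose A"
  show ?thesis unfolding pinv_def
  proof (rule the_equality)
    show "A ** ?B ** A = A \<and> ?B ** A ** ?B = ?B \<and>
      transpose (A ** ?B) = A ** ?B \<and> transpose (?B ** A) = ?B ** A"
    proof (intro conjI)
      show "A ** ?B ** A = A" using MG by (metis matrix_mul_assoc matrix_mul_rid)
      show "?B ** A ** ?B = ?B" using MG by (metis matrix_mul_assoc matrix_mul_lid)
      show "transpose (A ** ?B) = A ** ?B" using sM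
        by (simp add: matrix_transpose_mul matrix_mul_assoc)
      show "transpose (?B ** A) = ?B ** A" using MG
        by (metis matrix_mul_assoc transpose_mat)
    qed
  next
    fix B assume h: "A ** B ** A = A \<and> B ** A ** B = B \<and>
      transpose (A ** B) = A ** B \<and> transpose (B ** A) = B ** A"
    have "?G ** B = transpose A ** transpose (A ** B)"
      using h by (simp add: matrix_mul_assoc)
    also have "\<dots> = transpose (A ** B ** A)" by (simp add: matrix_transpose_mul matrix_mul_assoc)
    also have "\<dots> = transpose A" using h by simp
    finally have "?G ** B = transpose A" .
    then have "?M ** (?G ** B) = ?B" by simp
    then show "B = ?B" using MG by (metis matrix_mul_assoc matrix_mul_lid)
  qed
qed

lemma mv_neg: "A *v (- x) = - (A *v (x::real^'n))"
  by (simp add: vec_eq_iff matrix_vector_mult_def sum_negf)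

lemma transpose_add_scale: "transpose (c *\<^sub>R A + B) = c *\<^sub>R transpose A + transpose (B::real^'n^'m)"
  by (simp add: transpose_def vec_eq_iff)

lemma inj_ker: "inj ((*v) (A::real^'n^'m)) \<longleftrightarrow> (\<forall>x. A *v x = 0 \<longrightarrow> x = 0)"
  using matrix_left_invertible_ker matrix_left_invertible_injective by blast

theorem mainTheorem3:
  fixes r :: "real^'l \<Rightarrow> real^'m" and \<mu> :: "real^'l \<Rightarrow> real"
    and x :: "real^'l" and Jr :: "real^'l^'m" and g\<mu> :: "real^'l" and U :: "(real^'l) set"
  assumes r_diff: "\<And>y. r differentiable (at y)"
    and r_deriv: "(r has_derivative (\<lambda>h. Jr *v h)) (at x)"
    and mu_pos: "\<And>y. \<mu> y > 0"
    and U: "open U" "x \<in> U" and mu_diff: "\<mu> differentiable_on U"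
    and mu_deriv: "(\<mu> has_derivative (\<lambda>h. g\<mu> \<bullet> h)) (at x)"
    and full_rank: "rank Jr = CARD('l)"
    and omega_nz: "(let p = - (pinv Jr *v r x);
                        g\<eta> = (1 / \<mu> x) *\<^sub>R g\<mu>;
                        \<beta> = 1 - p \<bullet> g\<eta>;
                        P = mat 1 - Jr ** pinv Jr
                    in (norm (P *v r x))\<^sup>2 * (norm (transpose (pinv Jr) *v g\<eta>))\<^sup>2 + \<beta>\<^sup>2) \<noteq> 0"
  shows "(let p = - (pinv Jr *v r x);
              g\<eta> = (1 / \<mu> x) *\<^sub>R g\<mu>;
              \<beta> = 1 - p \<bullet> g\<eta>;
              P = mat 1 - Jr ** pinv Jr;
              \<omega> = (norm (P *v r x))\<^sup>2 * (norm (transpose (pinv Jr) *v g\<eta>))\<^sup>2 + \<beta>\<^sup>2;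
              J\<mu>r = \<mu> x *\<^sub>R Jr + outer (r x) g\<mu>;
              p_hat = - (pinv J\<mu>r *v (\<mu> x *\<^sub>R r x))
          in p_hat = (\<beta> / \<omega>) *\<^sub>R p
                     + (- (norm (P *v r x))\<^sup>2 / \<omega>) *\<^sub>R (matrix_inv (transpose Jr ** Jr) *v g\<eta>))"
proof -
  define m where "m = \<mu> x"
  define rx where "rx = r x"
  define G where "G = transpose Jr ** Jr"
  define M where "M = matrix_inv G"
  have m0: "m > 0" using mu_pos m_def by auto
  have injJ: "inj ((*v) Jr)" using full_rank full_rank_injective by blast
  have iG: "invertible G" using gram_inv[OF injJ] G_def by simp
  have GM: "G ** M = mat 1" and MG: "M ** G = mat 1" using minv[OF iG] M_def by auto
  have sG: "transpose G = G" by (simp add: G_def matrix_transpose_mul)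
  have sM: "transpose M = M" using minv_sym[OF iG sG] M_def by simp
  have pJ: "pinv Jr = M ** transpose Jr" using pinv_inj[OF injJ] M_def G_def by simp
  define h where "h = (1 / m) *\<^sub>R g\<mu>"
  have gh: "g\<mu> = m *\<^sub>R h" using m0 h_def by simp
  define p where "p = - (pinv Jr *v rx)"
  define s where "s = Jr *v (pinv Jr *v rx)"
  define q where "q = rx - s"
  define t where "t = transpose (pinv Jr) *v h"
  define c where "c = (norm q)\<^sup>2"
  define \<beta> where "\<beta> = 1 - p \<bullet> h"
  define \<nu> where "\<nu> = t \<bullet> t"
  define \<omega> where "\<omega> = c * \<nu> + \<beta>\<^sup>2"
  have hq: "(mat 1 - Jr ** pinv Jr) *v rx = q"
    by (simp add: matrix_vector_mult_diff_rdistrib matrix_vector_mul_assoc q_def s_def)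
  have \<omega>0: "\<omega> \<noteq> 0"
    using omega_nz unfolding Let_def
    by (simp add: hq[unfolded rx_def] \<omega>_def c_def \<nu>_def t_def h_def m_def \<beta>_def p_def rx_def power2_norm_eq_inner)
  have tJ: "t = Jr *v (M *v h)"
    by (simp add: t_def pJ matrix_transpose_mul sM matrix_vector_mul_assoc del: transpose_matrix_vector)
  have JTs: "transpose Jr *v s = transpose Jr *v rx"
  proof -
    have "transpose Jr *v s = (G ** M) *v (transpose Jr *v rx)"
      by (simp add: s_def pJ G_def matrix_vector_mul_assoc matrix_mul_assoc del: transpose_matrix_vector)
    then show ?thesis using GM by simp
  qed
  have JTq: "transpose Jr *v q = 0"
    by (simp add: q_def matrix_vector_mult_diff_distrib JTs del: transpose_matrix_vector)
  have JTt: "transpose Jr *v t = h"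
  proof -
    have "transpose Jr *v t = (G ** M) *v h"
      by (simp add: tJ G_def matrix_vector_mul_assoc matrix_mul_assoc del: transpose_matrix_vector)
    then show ?thesis using GM by simp
  qed
  have sq: "s \<bullet> q = 0" by (simp add: s_def inner_mv JTq del: transpose_matrix_vector)
  have tq: "t \<bullet> q = 0" by (simp add: tJ inner_mv JTq del: transpose_matrix_vector)
  have rq: "rx \<bullet> q = c"
  proof -
    have "rx = s + q" by (simp add: q_def)
    then have "rx \<bullet> q = s \<bullet> q + q \<bullet> q" by (metis inner_add_left)
    then show ?thesis using sq by (simp add: c_def power2_norm_eq_inner)
  qed
  have ph: "p \<bullet> h = - (rx \<bullet> t)"
    by (simp add: p_def t_def inner_mv del: transpose_matrix_vector)
  have rt: "rx \<bullet> t = \<beta> - 1" using ph \<beta>_def by simp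
  have hMh: "(M *v h) \<bullet> h = \<nu>"
  proof -
    have "\<nu> = (Jr *v (M *v h)) \<bullet> t" using tJ \<nu>_def by simp
    also have "\<dots> = (M *v h) \<bullet> h" by (simp only: inner_mv JTt)
    finally show ?thesis by simp
  qed
  define K where "K = m *\<^sub>R Jr + outer rx g\<mu>"
  have Kv: "\<And>v. K *v v = m *\<^sub>R (Jr *v v) + (g\<mu> \<bullet> v) *\<^sub>R rx"
    by (simp add: K_def matrix_vector_mult_add_rdistrib scaleR_matrix_vector_assoc outer_mv)
  have KTv: "\<And>v. transpose K *v v = m *\<^sub>R (transpose Jr *v v) + (rx \<bullet> v) *\<^sub>R g\<mu>"
    by (simp add: K_def transpose_add_scale transpose_outer matrix_vector_mult_add_rdistrib
        scaleR_matrix_vector_assoc outer_mv del: transpose_matrix_vector)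
  have injK: "inj ((*v) K)"
    unfolding inj_ker
  proof (intro allI impI)
    fix v assume Kv0: "K *v v = 0"
    define a where "a = g\<mu> \<bullet> v"
    have e: "m *\<^sub>R (Jr *v v) + a *\<^sub>R rx = 0" using Kv0 Kv a_def by simp
    show "v = 0"
    proof (cases "a = 0")
      case True
      then have "Jr *v v = 0" using e m0 by simp
      then show ?thesis using injJ inj_ker by blast
    next
      case False
      define w where "w = (- (m / a)) *\<^sub>R v"
      have rw: "rx = Jr *v w"
      proof -
        have "a *\<^sub>R rx = - (m *\<^sub>R (Jr *v v))" using e by (simp add: eq_neg_iff_add_eq_0 add.commute)
        moreover have "rx = (1/a) *\<^sub>R (a *\<^sub>R rx)" using False by simp
        ultimately have "rx = (1/a) *\<^sub>R (- (m *\<^sub>R (Jr *v v)))" by simp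
        then show ?thesis by (simp add: w_def matrix_vector_mult_scaleR flip: scaleR_minus_left)
      qed
      have pw: "pinv Jr *v rx = w"
      proof -
        have "pinv Jr *v rx = (M ** G) *v w"
          by (simp add: rw pJ G_def matrix_vector_mul_assoc matrix_mul_assoc)
        then show ?thesis using MG by simp
      qed
      have "s = Jr *v w" unfolding s_def pw ..
      then have "s = rx" using rw by simp
      then have "q = 0" by (simp add: q_def)
      then have c0: "c = 0" by (simp add: c_def)
      have "w \<bullet> h = -1" using False m0
        by (simp add: w_def h_def a_def inner_commute)
      then have "\<beta> = 0" by (simp add: \<beta>_def p_def pw)
      then have "\<omega> = 0" using c0 by (simp add: \<omega>_def)
      then show ?thesis using \<omega>0 by simp
    qed
  qed
  define GK where "GK = transpose K ** K"
  define MK where "MK = matrix_inv GK"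
  have iGK: "invertible GK" using gram_inv[OF injK] GK_def by simp
  have MGK: "MK ** GK = mat 1" using minv[OF iGK] MK_def by auto
  have pK: "pinv K = MK ** transpose K" using pinv_inj[OF injK] MK_def GK_def by simp
  define y where "y = (\<beta> / \<omega>) *\<^sub>R p + (- c / \<omega>) *\<^sub>R (M *v h)"
  have Jy: "Jr *v y = (- (\<beta> / \<omega>)) *\<^sub>R s + (- c / \<omega>) *\<^sub>R t"
    by (simp add: mv_neg matrix_vector_mult_diff_distrib y_def matrix_vector_right_distrib matrix_vector_mult_scaleR p_def s_def tJ)
  have hy: "h \<bullet> y = (\<beta> / \<omega>) * (1 - \<beta>) + (- c / \<omega>) * \<nu>"
  proof -
    have "h \<bullet> y = (\<beta> / \<omega>) * (h \<bullet> p) + (- c / \<omega>) * (h \<bullet> (M *v h))"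
      unfolding y_def by (simp only: inner_add_right inner_scaleR_right)
    moreover have "h \<bullet> p = 1 - \<beta>" by (simp add: \<beta>_def inner_commute)
    moreover have "h \<bullet> (M *v h) = \<nu>" using hMh by (simp add: inner_commute)
    ultimately show ?thesis by simp
  qed
  have sc: "m * ((\<beta> / \<omega>) * (1 - \<beta>) + (- c / \<omega>) * \<nu>) + m = m * \<beta> / \<omega>"
  proof -
    have e1: "\<beta> * (1 - \<beta>) - c * \<nu> + \<omega> = \<beta>" by (simp add: \<omega>_def power2_eq_square algebra_simps)
    have "m * ((\<beta> / \<omega>) * (1 - \<beta>) + (- c / \<omega>) * \<nu>) + m
        = m * ((\<beta> * (1 - \<beta>) - c * \<nu> + \<omega>) / \<omega>)"
      using \<omega>0 by (simp add: field_simps)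
    then show ?thesis using e1 by simp
  qed
  have Ky: "K *v y + m *\<^sub>R rx = (m / \<omega>) *\<^sub>R (\<beta> *\<^sub>R q - c *\<^sub>R t)"
  proof -
    have "K *v y + m *\<^sub>R rx = m *\<^sub>R (Jr *v y) + (m * ((\<beta> / \<omega>) * (1 - \<beta>) + (- c / \<omega>) * \<nu>) + m) *\<^sub>R rx"
      by (simp add: Kv gh hy scaleR_add_left)
    also have "\<dots> = m *\<^sub>R (Jr *v y) + (m * \<beta> / \<omega>) *\<^sub>R rx" using sc by simp
    also have "\<dots> = (m / \<omega>) *\<^sub>R (\<beta> *\<^sub>R q - c *\<^sub>R t)"
      by (simp add: Jy q_def algebra_simps)
    finally show ?thesis .
  qed
  have KTq: "transpose K *v q = c *\<^sub>R g\<mu>" by (simp add: KTv JTq rq del: transpose_matrix_vector)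
  have KTt: "transpose K *v t = \<beta> *\<^sub>R g\<mu>"
    by (simp add: KTv JTt rt gh algebra_simps del: transpose_matrix_vector)
  have main: "transpose K *v (K *v y + m *\<^sub>R rx) = 0"
    by (simp add: Ky matrix_vector_mult_scaleR matrix_vector_mult_diff_distrib KTq KTt del: transpose_matrix_vector)
  have "GK *v y = - (transpose K *v (m *\<^sub>R rx))"
    using main by (simp add: GK_def matrix_vector_mul_assoc[symmetric] matrix_vector_right_distrib
        eq_neg_iff_add_eq_0 del: transpose_matrix_vector)
  then have "pinv K *v (m *\<^sub>R rx) = - y"
    by (metis MGK pK matrix_vector_mul_assoc matrix_vector_mul_lid mv_neg minus_minus)
  then have fin: "- (pinv K *v (m *\<^sub>R rx)) = y" by simp
  show ?thesis
    unfolding Let_def using fin hq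
    by (simp add: M_def G_def y_def K_def m_def rx_def \<beta>_def \<omega>_def c_def \<nu>_def t_def h_def p_def power2_norm_eq_inner)
qed

end
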